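(* Let $(Q,\rightarrow)$ be a finite transition system, $\mathscr{R}$ a preorder on $Q$ and $\mathscr{P}\subseteq\mathscr{R}$ an equivalence relation with a representative $E.\mathrm{rep}\in E$ fixed for each block $E$ of $\mathscr{P}$, such that there is no $(\mathscr{P},\mathscr{R})$-splitter transition of type 1 and no $(\mathscr{P},\mathscr{R})$-splitter transition of type 2. Then $\mathscr{P}$ is $\mathscr{R}$-block-stable.
   Context: A preorder is a reflexive transitive relation; its blocks are $[q]_{\mathscr{R}}=\{q'\mid q\,\mathscr{R}\,q'\wedge q'\,\mathscr{R}\,q\}$. $\mathscr{R}(X)=\{q'\mid\exists q\in X.\ q\,\mathscr{R}\,q'\}$, $\rightarrow^{-1}(Y)=\{q\mid\exists y\in Y.\ q\rightarrow y\}$; for sets, $X\rightarrow Y$ means some $x\in X,y\in Y$ have $x\rightarrow y$, and $X\,\mathscr{R}\,Y$ means $(X\times Y)\cap\mathscr{R}\neq\emptyset$. For a block $E$ of $\mathscr{P}$ and a block $B$ of $\mathscr{R}$, $\mathrm{RelCount}_{(\mathscr{P},\mathscr{R})}(E,B)=|\{E'\text{ block of }\mathscr{P}\mid E.\mathrm{rep}\rightarrow E'\wedge B\,\mathscr{R}\,E'\}|$. A splitter transition of type 1 is a pair ($E$ block of $\mathscr{P}$, $B$ block of $\mathscr{R}$) with $E\rightarrow B$ and $\mathrm{RelCount}_{(\mathscr{P},\mathscr{R})}(E,B)=0$. A splitter transition of type 2 is a pair ($E$, $B$) with $E.\mathrm{rep}\rightarrow B$, $\mathrm{RelCount}_{(\mathscr{P},\mathscr{R})}(E,B)=|\{[b]_{\mathscr{P}}\subseteq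 B\mid E.\mathrm{rep}\rightarrow b\}|$ and $E\not\subseteq\rightarrow^{-1}(B)$. $\mathscr{P}$ is $\mathscr{R}$-block-stable if for all $b,d,d'$ with $d\,\mathscr{P}\,d'$: $d\in\rightarrow^{-1}(\mathscr{R}(b))\iff d'\in\rightarrow^{-1}(\mathscr{R}(b))$. *)

theory Defs
  imports Main
begin

definition blk :: "('a \<times> 'a) set \<Rightarrow> 'a \<Rightarrow> 'a set" where
  "blk R q = {q'. (q, q') \<in> R \<and> (q', q) \<in> R}"

definition blocks :: "'a set \<Rightarrow> ('a \<times> 'a) set \<Rightarrow> 'a set set" where
  "blocks Q R = blk R ` Q"

definition preimg :: "('a \<times> 'a) set \<Rightarrow> 'a set \<Rightarrow> 'a set" where
  "preimg T Y = {q. \<exists>y\<in>Y. (q, y) \<in> T}"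

definition set_trans :: "('a \<times> 'a) set \<Rightarrow> 'a set \<Rightarrow> 'a set \<Rightarrow> bool" where
  "set_trans T X Y \<longleftrightarrow> (\<exists>x\<in>X. \<exists>y\<in>Y. (x, y) \<in> T)"

definition set_rel :: "('a \<times> 'a) set \<Rightarrow> 'a set \<Rightarrow> 'a set \<Rightarrow> bool" where
  "set_rel R X Y \<longleftrightarrow> (X \<times> Y) \<inter> R \<noteq> {}"

definition RelCount :: "'a set \<Rightarrow> ('a \<times> 'a) set \<Rightarrow> ('a \<times> 'a) set \<Rightarrow> ('a \<times> 'a) set
    \<Rightarrow> ('a set \<Rightarrow> 'a) \<Rightarrow> 'a set \<Rightarrow> 'a set \<Rightarrow> nat" where
  "RelCount Q T P R rep E B =
     card {E' \<in> blocks Q P. set_trans T {rep E} E' \<and> set_rel R B E'}"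

definition splitter1 :: "'a set \<Rightarrow> ('a \<times> 'a) set \<Rightarrow> ('a \<times> 'a) set \<Rightarrow> ('a \<times> 'a) set
    \<Rightarrow> ('a set \<Rightarrow> 'a) \<Rightarrow> 'a set \<Rightarrow> 'a set \<Rightarrow> bool" where
  "splitter1 Q T P R rep E B \<longleftrightarrow>
     E \<in> blocks Q P \<and> B \<in> blocks Q R \<and> set_trans T E B \<and> RelCount Q T P R rep E B = 0"

definition splitter2 :: "'a set \<Rightarrow> ('a \<times> 'a) set \<Rightarrow> ('a \<times> 'a) set \<Rightarrow> ('a \<times> 'a) set
    \<Rightarrow> ('a set \<Rightarrow> 'a) \<Rightarrow> 'a set \<Rightarrow> 'a set \<Rightarrow> bool" where
  "splitter2 Q T P R rep E B \<longleftrightarrow>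
     E \<in> blocks Q P \<and> B \<in> blocks Q R \<and> set_trans T {rep E} B \<and>
     RelCount Q T P R rep E B = card {C. \<exists>b. C = blk P b \<and> C \<subseteq> B \<and> (rep E, b) \<in> T} \<and>
     \<not> E \<subseteq> preimg T B"

definition block_stable :: "'a set \<Rightarrow> ('a \<times> 'a) set \<Rightarrow> ('a \<times> 'a) set \<Rightarrow> ('a \<times> 'a) set \<Rightarrow> bool" where
  "block_stable Q T P R \<longleftrightarrow>
     (\<forall>b\<in>Q. \<forall>d\<in>Q. \<forall>d'\<in>Q. (d, d') \<in> P \<longrightarrow>
        (d \<in> preimg T (R `` {b}) \<longleftrightarrow> d' \<in> preimg T (R `` {b})))"

end

theory Submission
  imports Defs
begin

lemma min_exists:
  fixes f :: "'a \<Rightarrow> nat"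
  assumes "finite S" "y \<in> S"
  shows "\<exists>z\<in>S. \<forall>w\<in>S. f z \<le> f w"
proof -
  have "finite (f ` S)" "f ` S \<noteq> {}" using assms by auto
  then have "Min (f ` S) \<in> f ` S" by (rule Min_in)
  then obtain z where z: "z \<in> S" "f z = Min (f ` S)" by auto
  have "\<forall>w\<in>S. f z \<le> f w" using z \<open>finite (f ` S)\<close> by auto
  with z show ?thesis by blast
qed

theorem theorem2:
  fixes Q :: "'a set" and T P R :: "('a \<times> 'a) set" and rep :: "'a set \<Rightarrow> 'a"
  assumes "finite Q"
    and "T \<subseteq> Q \<times> Q"
    and "R \<subseteq> Q \<times> Q"
    and "preorder_on Q R"
    and "equiv Q P"
    and "P \<subseteq> R"
    and "\<forall>E \<in> Q // P. rep E \<in> E"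
    and "\<not> (\<exists>E B. splitter1 Q T P R rep E B)"
    and "\<not> (\<exists>E B. splitter2 Q T P R rep E B)"
  shows "block_stable Q T P R"
proof -
  have Rrefl: "\<And>x. x \<in> Q \<Longrightarrow> (x, x) \<in> R" using assms(4)
    unfolding preorder_on_def refl_on_def by blast
  have Rtrans: "\<And>x y z. (x, y) \<in> R \<Longrightarrow> (y, z) \<in> R \<Longrightarrow> (x, z) \<in> R" using assms(4)
    unfolding preorder_on_def trans_def by blast
  have PQ: "P \<subseteq> Q \<times> Q" and Prefl: "\<And>x. x \<in> Q \<Longrightarrow> (x, x) \<in> P"
    and Psym: "\<And>x y. (x, y) \<in> P \<Longrightarrow> (y, x) \<in> P"
    and Ptrans: "\<And>x y z. (x, y) \<in> P \<Longrightarrow> (y, z) \<in> P \<Longrightarrow> (x, z) \<in> P"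
    using assms(5) unfolding equiv_def refl_on_def sym_def trans_def by blast+
  have TQ: "\<And>x y. (x, y) \<in> T \<Longrightarrow> x \<in> Q \<and> y \<in> Q" using assms(2) by blast
  have blkP: "\<And>q. blk P q = P `` {q}" unfolding blk_def using Psym by blast
  have key: "\<And>d e1 e2 b. d \<in> Q \<Longrightarrow> e1 \<in> blk P d \<Longrightarrow> e2 \<in> blk P d \<Longrightarrow>
      e1 \<in> preimg T (R `` {b}) \<Longrightarrow> e2 \<in> preimg T (R `` {b})"
  proof -
    fix d e1 e2 b
    assume dQ: "d \<in> Q" and e1: "e1 \<in> blk P d" and e2: "e2 \<in> blk P d"
      and pre: "e1 \<in> preimg T (R `` {b})"
    define E where "E = blk P d"
    define r where "r = rep E"
    have EQP: "E \<in> Q // P" unfolding E_def blkP quotient_def using dQ by blast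
    have EB: "E \<in> blocks Q P" unfolding E_def blocks_def using dQ by blast
    have rE: "r \<in> E" using assms(7) EQP r_def by blast
    from pre obtain x where x: "(e1, x) \<in> T" "(b, x) \<in> R" unfolding preimg_def by blast
    have "\<exists>y. (r, y) \<in> T \<and> (x, y) \<in> R"
    proof -
      have xQ: "x \<in> Q" using TQ x(1) by blast
      define B where "B = blk R x"
      have BB: "B \<in> blocks Q R" unfolding B_def blocks_def using xQ by blast
      have xB: "x \<in> B" unfolding B_def blk_def using Rrefl xQ by blast
      have "set_trans T E B" unfolding set_trans_def using e1 x(1) xB E_def by blast
      moreover have "\<not> splitter1 Q T P R rep E B" using assms(8) by blast
      ultimately have "RelCount Q T P R rep E B \<noteq> 0" using EB BB unfolding splitter1_def by simp
      then have "{E' \<in> blocks Q P. set_trans T {rep E} E' \<and> set_rel R B E'} \<noteq> {}"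
        unfolding RelCount_def by (metis card.empty)
      then obtain E' where E': "E' \<in> blocks Q P" "set_trans T {r} E'" "set_rel R B E'"
        using r_def by blast
      obtain q where q: "E' = blk P q" using E'(1) unfolding blocks_def by blast
      obtain e'' where e'': "(r, e'') \<in> T" "e'' \<in> E'" using E'(2) unfolding set_trans_def by blast
      obtain b1 e' where b1: "b1 \<in> B" "e' \<in> E'" "(b1, e') \<in> R" using E'(3)
        unfolding set_rel_def by blast
      have "(q, e') \<in> P" "(e'', q) \<in> P" using b1(2) e''(2) q unfolding blk_def by blast+
      then have "(e', e'') \<in> P" using Ptrans Psym by metis
      then have "(e', e'') \<in> R" using assms(6) by blast
      moreover have "(x, b1) \<in> R" using b1(1) unfolding B_def blk_def by blast
      ultimately have "(x, e'') \<in> R" using b1(3) Rtrans by blast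
      then show ?thesis using e''(1) by blast
    qed
    then obtain y where y: "(r, y) \<in> T" "(x, y) \<in> R" by blast
    define S where "S = {z. (r, z) \<in> T \<and> (y, z) \<in> R}"
    have yQ: "y \<in> Q" using TQ y(1) by blast
    have "S \<subseteq> Q" unfolding S_def using TQ by blast
    then have finS: "finite S" using assms(1) by (rule finite_subset)
    have "y \<in> S" unfolding S_def using y(1) Rrefl yQ by blast
    from min_exists[OF finS this, of "\<lambda>z. card (R `` {z})"]
    obtain z where zS: "z \<in> S" and zmin: "\<forall>w\<in>S. card (R `` {z}) \<le> card (R `` {w})" by blast
    have zQ: "z \<in> Q" using zS TQ unfolding S_def by blast
    have maxz: "\<And>w. w \<in> S \<Longrightarrow> (z, w) \<in> R \<Longrightarrow> (w, z) \<in> R"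
    proof -
      fix w assume wS: "w \<in> S" and zw: "(z, w) \<in> R"
      have sub: "R `` {w} \<subseteq> R `` {z}" using zw Rtrans by blast
      have "R `` {z} \<subseteq> Q" using assms(3) by blast
      then have fin: "finite (R `` {z})" using assms(1) by (rule finite_subset)
      have "card (R `` {z}) \<le> card (R `` {w})" using zmin wS by blast
      then have "card (R `` {w}) = card (R `` {z})" using card_mono[OF fin sub] by linarith
      then have "R `` {w} = R `` {z}" by (rule card_subset_eq[OF fin sub])
      moreover have "z \<in> R `` {z}" using Rrefl zQ by blast
      ultimately show "(w, z) \<in> R" by blast
    qed
    define B where "B = blk R z"
    have BB: "B \<in> blocks Q R" unfolding B_def blocks_def using zQ by blast
    have zB: "z \<in> B" unfolding B_def blk_def using Rrefl zQ by blast
    have rz: "(r, z) \<in> T" using zS unfolding S_def by blast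
    have st: "set_trans T {rep E} B" unfolding set_trans_def r_def[symmetric] using rz zB by blast
    have seteq: "{E' \<in> blocks Q P. set_trans T {rep E} E' \<and> set_rel R B E'}
        = {C. \<exists>b. C = blk P b \<and> C \<subseteq> B \<and> (rep E, b) \<in> T}"
    proof (intro equalityI subsetI)
      fix E' assume "E' \<in> {E' \<in> blocks Q P. set_trans T {rep E} E' \<and> set_rel R B E'}"
      then have E': "E' \<in> blocks Q P" "set_trans T {r} E'" "set_rel R B E'" using r_def by auto
      obtain q where q: "E' = blk P q" using E'(1) unfolding blocks_def by blast
      obtain e'' where e'': "(r, e'') \<in> T" "e'' \<in> E'" using E'(2) unfolding set_trans_def by blast
      obtain b1 e' where b1: "b1 \<in> B" "e' \<in> E'" "(b1, e') \<in> R" using E'(3)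
        unfolding set_rel_def by blast
      have "(q, e') \<in> P" "(e'', q) \<in> P" using b1(2) e''(2) q unfolding blk_def by blast+
      then have "(e', e'') \<in> P" using Ptrans Psym by metis
      then have "(e', e'') \<in> R" using assms(6) by blast
      moreover have "(z, b1) \<in> R" using b1(1) unfolding B_def blk_def by blast
      ultimately have ze: "(z, e'') \<in> R" using b1(3) Rtrans by blast
      have yz: "(y, z) \<in> R" using zS unfolding S_def by blast
      have "e'' \<in> S" unfolding S_def using e''(1) Rtrans[OF yz ze] by blast
      then have ez: "(e'', z) \<in> R" using maxz ze by blast
      have eq: "E' = blk P e''" unfolding q blkP
      proof -
        have "(q, e'') \<in> P" using e''(2) q unfolding blk_def by blast
        then show "P `` {q} = P `` {e''}" using equiv_class_eq[OF assms(5)] by blast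
      qed
      have "blk P e'' \<subseteq> B"
      proof
        fix u assume "u \<in> blk P e''"
        then have "(u, e'') \<in> R" "(e'', u) \<in> R" using assms(6) unfolding blk_def by blast+
        then show "u \<in> B" unfolding B_def blk_def using ze ez Rtrans by blast
      qed
      then show "E' \<in> {C. \<exists>b. C = blk P b \<and> C \<subseteq> B \<and> (rep E, b) \<in> T}"
        using eq e''(1) r_def by blast
    next
      fix C assume "C \<in> {C. \<exists>b. C = blk P b \<and> C \<subseteq> B \<and> (rep E, b) \<in> T}"
      then obtain b' where C: "C = blk P b'" "C \<subseteq> B" "(r, b') \<in> T" using r_def by blast
      have bQ: "b' \<in> Q" using TQ C(3) by blast
      have bC: "b' \<in> C" unfolding C(1) blk_def using Prefl bQ by blast
      have "C \<in> blocks Q P" unfolding blocks_def using C(1) bQ by blast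
      moreover have "set_trans T {rep E} C" unfolding set_trans_def using bC C(3) r_def by blast
      moreover have "set_rel R B C" unfolding set_rel_def using bC C(2) Rrefl bQ by blast
      ultimately show "C \<in> {E' \<in> blocks Q P. set_trans T {rep E} E' \<and> set_rel R B E'}" by blast
    qed
    have "RelCount Q T P R rep E B = card {C. \<exists>b. C = blk P b \<and> C \<subseteq> B \<and> (rep E, b) \<in> T}"
      unfolding RelCount_def seteq ..
    moreover have "\<not> splitter2 Q T P R rep E B" using assms(9) by blast
    ultimately have "E \<subseteq> preimg T B" using EB BB st unfolding splitter2_def by simp
    then obtain w where w: "(e2, w) \<in> T" "w \<in> B" using e2 E_def unfolding preimg_def by blast
    have "(z, w) \<in> R" using w(2) unfolding B_def blk_def by blast
    moreover have "(y, z) \<in> R" using zS unfolding S_def by blast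
    ultimately have "(b, w) \<in> R" using x(2) y(2) Rtrans by blast
    then show "e2 \<in> preimg T (R `` {b})" unfolding preimg_def using w(1) by blast
  qed
  show ?thesis unfolding block_stable_def
  proof (intro ballI impI)
    fix b d d' assume "b \<in> Q" "d \<in> Q" "d' \<in> Q" "(d, d') \<in> P"
    then have "d \<in> blk P d" "d' \<in> blk P d" unfolding blk_def using Prefl Psym by blast+
    then show "d \<in> preimg T (R `` {b}) \<longleftrightarrow> d' \<in> preimg T (R `` {b})"
      using key \<open>d \<in> Q\<close> by blast
  qed
qed

end
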